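(* Suppose $\alpha(n)$ is a log-polynomial sequence of degree $m\ge2$ with data $\{A(n),\kappa,\delta(n)\}$. Then $\alpha$ is Hermite-Jensen of degree $d$ with the same data $\{A(n),\kappa,\delta(n)\}$ for every $d$ with $1\le d\le m+1$.
   Context: Jensen polynomials: $J_\alpha^{d,n}(X)=\sum_{j=0}^d\binom{d}{j}\alpha(n+j)X^j$ and $K_\alpha^{d,n}(X)=X^dJ_\alpha^{d,n}(1/X)=\sum_{j=0}^d\binom dj\alpha(n+j)X^{d-j}$. Limits of polynomials of bounded degree are coefficientwise. $H_d$ is the (physicists') Hermite polynomial, defined by $e^{2Xt-t^2}=\sum_{d\ge0}H_d(X)t^d/d!$. Equivalently, $$H_d(X/2)=\sum_{k}\frac{d!}{(d-k)!}\binom{d-k}{k}(-1)^kX^{d-2k},\qquad i^{-d}H_d(iX/2)=\sum_k\frac{d!}{(d-k)!}\binom{d-k}{k}X^{d-2k}.$$ Log-polynomial: let $m\ge2$ be an integer and $\kappa\in\{1,-1\}$. A sequence of positive reals $\alpha(n)$ is log-polynomial of degree $m$ with data $\{A(n),\kappa,\delta(n)\}$ if there are real sequences $A(n),\delta(n),g_k(n)$ ($3\le k\le m$) such that $$\log\left(\frac{\alpha(n+j)}{\alpha(n)}\right)=A(n)j+\kappa\delta(n)^2j^2+\sum_{k=3}^m g_k(n)j^k+o(\delta(n)^{m+1})\quad(n\to\infty)$$ for $j=1,\dots,m+1$. In addition, $\delta(n)>0$, $\delta(n)\to0$ and $g_k(n)=o(\delta(n)^k)$. Hermite-Jensen: a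 sequence of positive reals $\alpha(n)$ is Hermite-Jensen of degree $d\ge1$ with data $\{A(n),\kappa,\delta(n)\}$ (where $\kappa=\pm1$ and $\delta(n)>0$) if, as $n\to\infty$, both $$\frac{\delta(n)^{-d}}{\alpha(n)}J_\alpha^{d,n}\!\left(\frac{\delta(n)X-1}{e^{A(n)}}\right)\quad\text{and}\quad\frac{(e^{A(n)}\delta(n))^{-d}}{\alpha(n)}K_\alpha^{d,n}\!\left(e^{A(n)}(\delta(n)X-1)\right)$$ converge coefficientwise to $H_d(X/2)$ if $\kappa=-1$, and to $i^{-d}H_d(iX/2)$ if $\kappa=1$. *)

theory Defs
  imports "HOL-Analysis.Analysis" "HOL-Computational_Algebra.Polynomial" "HOL-Library.Landau_Symbols"
begin

definition jensenJ :: "(nat \<Rightarrow> real) \<Rightarrow> nat \<Rightarrow> nat \<Rightarrow> real poly" where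
  "jensenJ \<alpha> d n = (\<Sum>j\<le>d. monom (real (d choose j) * \<alpha> (n + j)) j)"

definition jensenK :: "(nat \<Rightarrow> real) \<Rightarrow> nat \<Rightarrow> nat \<Rightarrow> real poly" where
  "jensenK \<alpha> d n = (\<Sum>j\<le>d. monom (real (d choose j) * \<alpha> (n + j)) (d - j))"

definition hermite :: "nat \<Rightarrow> real poly" where
  "hermite d = (\<Sum>k\<le>d div 2.
      monom ((-1) ^ k * fact d / (fact k * fact (d - 2 * k)) * 2 ^ (d - 2 * k)) (d - 2 * k))"

definition hermite_target :: "real \<Rightarrow> nat \<Rightarrow> complex poly" where
  "hermite_target \<kappa> d =
     (if \<kappa> = -1
      then (map_poly of_real (pcompose (hermite d) [:0, 1/2:]) :: complex poly)
      else smult (inverse (\<i> ^ d))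
             (pcompose (map_poly of_real (hermite d) :: complex poly) [:0, \<i> / 2:]))"

definition poly_coeff_tendsto :: "(nat \<Rightarrow> 'a::real_normed_vector poly) \<Rightarrow> 'a poly \<Rightarrow> bool" where
  "poly_coeff_tendsto P Q \<longleftrightarrow> (\<forall>i. (\<lambda>n. coeff (P n) i) \<longlonglongrightarrow> coeff Q i)"

definition log_polynomial ::
  "(nat \<Rightarrow> real) \<Rightarrow> nat \<Rightarrow> (nat \<Rightarrow> real) \<Rightarrow> real \<Rightarrow> (nat \<Rightarrow> real) \<Rightarrow> bool" where
  "log_polynomial \<alpha> m A \<kappa> \<delta> \<longleftrightarrow>
     m \<ge> 2 \<and> (\<kappa> = 1 \<or> \<kappa> = -1) \<and> (\<forall>n. \<alpha> n > 0) \<and>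
     (\<forall>n. \<delta> n > 0) \<and> \<delta> \<longlonglongrightarrow> 0 \<and>
     (\<exists>g :: nat \<Rightarrow> nat \<Rightarrow> real.
        (\<forall>k\<in>{3..m}. g k \<in> o[sequentially](\<lambda>n. \<delta> n ^ k)) \<and>
        (\<forall>j\<in>{1..m+1}.
           (\<lambda>n. ln (\<alpha> (n + j) / \<alpha> n)
                 - (A n * real j + \<kappa> * \<delta> n ^ 2 * real j ^ 2
                    + (\<Sum>k=3..m. g k n * real j ^ k)))
           \<in> o[sequentially](\<lambda>n. \<delta> n ^ (m + 1))))"

definition hermite_jensen ::
  "(nat \<Rightarrow> real) \<Rightarrow> nat \<Rightarrow> (nat \<Rightarrow> real) \<Rightarrow> real \<Rightarrow> (nat \<Rightarrow> real) \<Rightarrow> bool" where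
  "hermite_jensen \<alpha> d A \<kappa> \<delta> \<longleftrightarrow>
     d \<ge> 1 \<and> (\<kappa> = 1 \<or> \<kappa> = -1) \<and> (\<forall>n. \<alpha> n > 0) \<and> (\<forall>n. \<delta> n > 0) \<and>
     poly_coeff_tendsto
       (\<lambda>n. map_poly complex_of_real
          (smult (inverse (\<delta> n ^ d)) (smult (inverse (\<alpha> n))
             (pcompose (jensenJ \<alpha> d n) [:- 1 / exp (A n), \<delta> n / exp (A n):]))))
       (hermite_target \<kappa> d) \<and>
     poly_coeff_tendsto
       (\<lambda>n. map_poly complex_of_real
          (smult (inverse ((exp (A n) * \<delta> n) ^ d)) (smult (inverse (\<alpha> n))
             (pcompose (jensenK \<alpha> d n) [:- exp (A n), exp (A n) * \<delta> n:]))))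
       (hermite_target \<kappa> d)"

end

theory Submission
  imports Defs
begin


definition fdiff :: "nat \<Rightarrow> (nat \<Rightarrow> real) \<Rightarrow> real" where
  "fdiff r f = (\<Sum>l\<le>r. real (r choose l) * (-1) ^ (r - l) * f l)"

lemma fdiff_Suc: "fdiff (Suc r) f = fdiff r (\<lambda>l. f (Suc l) - f l)"
proof -
  have A: "fdiff (Suc r) f = (-1) ^ Suc r * f 0 +
     (\<Sum>l\<le>r. real (r choose l) * (-1) ^ (r - l) * f (Suc l)) +
     (\<Sum>l\<le>r. real (r choose Suc l) * (-1) ^ (r - l) * f (Suc l))"
    unfolding fdiff_def
    by (subst sum.atMost_Suc_shift) (simp add: sum.distrib algebra_simps)
  have B: "(\<Sum>l\<le>r. real (r choose l) * (-1) ^ (r - l) * f l) =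
      (-1) ^ r * f 0 + (\<Sum>l<r. real (r choose Suc l) * (-1) ^ (r - Suc l) * f (Suc l))"
  proof (cases r)
    case 0 then show ?thesis by simp
  next
    case (Suc r')
    show ?thesis unfolding Suc
      by (subst sum.atMost_Suc_shift) (simp add: lessThan_Suc_atMost)
  qed
  have C: "(\<Sum>l\<le>r. real (r choose Suc l) * (-1) ^ (r - l) * f (Suc l)) =
      (\<Sum>l<r. real (r choose Suc l) * (-1) ^ (r - l) * f (Suc l))"
    by (simp add: lessThan_Suc_atMost[symmetric])
  have D: "(\<Sum>l<r. real (r choose Suc l) * (-1) ^ (r - Suc l) * f (Suc l)) =
      - (\<Sum>l<r. real (r choose Suc l) * (-1) ^ (r - l) * f (Suc l))"
    unfolding sum_negf[symmetric]
    apply (rule sum.cong, simp)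
    subgoal for x by (subgoal_tac "r - x = Suc (r - Suc x)") auto
    done
  show ?thesis
    unfolding fdiff_def
    apply (simp add: right_diff_distrib sum_subtractf)
    using A B C D unfolding fdiff_def by simp
qed

lemma fdiff_linear: "fdiff r (\<lambda>l. c * f l + g l) = c * fdiff r f + fdiff r g"
  unfolding fdiff_def by (simp add: sum.distrib sum_distrib_left algebra_simps)

lemma fdiff_sum: "finite A \<Longrightarrow> fdiff r (\<lambda>l. \<Sum>a\<in>A. F a l) = (\<Sum>a\<in>A. fdiff r (F a))"
  unfolding fdiff_def sum_distrib_left by (subst sum.swap) (simp add: sum_distrib_left mult.assoc)

lemma fdiff_pow:
  fixes x :: real
  shows "s \<le> r \<Longrightarrow> fdiff r (\<lambda>l. (x + real l) ^ s) = (if s = r then fact r else 0)"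
proof (induction r arbitrary: s)
  case 0
  then show ?case by (simp add: fdiff_def)
next
  case (Suc r)
  have e: "\<And>l. (x + real (Suc l)) ^ s - (x + real l) ^ s = (\<Sum>a<s. real (s choose a) * (x + real l) ^ a)"
  proof -
    fix l
    have "(x + real (Suc l)) ^ s = ((x + real l) + 1) ^ s" by (simp add: algebra_simps)
    also have "\<dots> = (\<Sum>a\<le>s. real (s choose a) * (x + real l) ^ a)"
      by (subst binomial_ring) (simp add: mult.commute)
    also have "\<dots> = (\<Sum>a<s. real (s choose a) * (x + real l) ^ a) + (x + real l) ^ s"
      by (simp add: lessThan_Suc_atMost[symmetric])
    finally show "(x + real (Suc l)) ^ s - (x + real l) ^ s = (\<Sum>a<s. real (s choose a) * (x + real l) ^ a)"
      by simp
  qed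
  have "fdiff (Suc r) (\<lambda>l. (x + real l) ^ s) = (\<Sum>a<s. real (s choose a) * fdiff r (\<lambda>l. (x + real l) ^ a))"
    unfolding fdiff_Suc e
    by (subst fdiff_sum) (simp_all add: fdiff_def sum_distrib_left mult_ac)
  also have "\<dots> = (\<Sum>a<s. real (s choose a) * (if a = r then fact r else 0))"
    using Suc by (intro sum.cong) auto
  also have "\<dots> = (if s = Suc r then fact (Suc r) else 0)"
  proof (cases "s = Suc r")
    case True
    then show ?thesis by (simp add: lessThan_Suc_atMost[symmetric] if_distrib sum.delta')
  next
    case False
    then have "\<not> r < s" using Suc.prems by auto
    then show ?thesis using False by (simp add: if_distrib sum.delta')
  qed
  finally show ?case .
qed



definition ctends :: "(nat \<Rightarrow> real poly) \<Rightarrow> real poly \<Rightarrow> bool" where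
  "ctends P Q \<longleftrightarrow> (\<forall>i. (\<lambda>n. coeff (P n) i) \<longlonglongrightarrow> coeff Q i)"

lemma ctends_const: "ctends (\<lambda>n. Q) Q" unfolding ctends_def by simp

lemma ctends_add: "ctends P Q \<Longrightarrow> ctends P' Q' \<Longrightarrow> ctends (\<lambda>n. P n + P' n) (Q + Q')"
  unfolding ctends_def by (auto intro: tendsto_add)

lemma ctends_mult: "ctends P Q \<Longrightarrow> ctends P' Q' \<Longrightarrow> ctends (\<lambda>n. P n * P' n) (Q * Q')"
  unfolding ctends_def coeff_mult by (auto intro!: tendsto_sum tendsto_mult)

lemma ctends_power: "ctends P Q \<Longrightarrow> ctends (\<lambda>n. P n ^ k) (Q ^ k)"
  by (induction k) (auto intro: ctends_mult ctends_const)

lemma ctends_smult: "ctends P Q \<Longrightarrow> ctends (\<lambda>n. smult c (P n)) (smult c Q)"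
  unfolding ctends_def by (auto intro: tendsto_mult)

lemma ctends_sum: "(\<And>t. t \<in> A \<Longrightarrow> ctends (P t) (Q t)) \<Longrightarrow> ctends (\<lambda>n. \<Sum>t\<in>A. P t n) (\<Sum>t\<in>A. Q t)"
  unfolding ctends_def coeff_sum by (auto intro!: tendsto_sum)

lemma poly_bounded_deg:
  fixes p :: "real poly"
  assumes "degree p \<le> N"
  shows "poly p x = (\<Sum>i\<le>N. coeff p i * x ^ i)"
  apply (subst poly_altdef)
  by (rule sum.mono_neutral_left) (use assms in \<open>auto simp: coeff_eq_0\<close>)

lemma exp_trunc_err:
  fixes y \<delta> :: "nat \<Rightarrow> real"
  assumes "\<And>n. \<delta> n > 0" "\<delta> \<longlonglongrightarrow> 0" "(\<lambda>n. y n / \<delta> n) \<longlonglongrightarrow> 0" "R < T"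
  shows "(\<lambda>n. (exp (y n) - (\<Sum>t<T. y n ^ t / fact t)) / \<delta> n ^ R) \<longlonglongrightarrow> 0"
proof (rule Lim_null_comparison)
  have y0: "y \<longlonglongrightarrow> 0"
  proof -
    have "(\<lambda>n. y n / \<delta> n * \<delta> n) \<longlonglongrightarrow> 0 * 0" by (intro tendsto_mult assms)
    moreover have "\<And>n. y n / \<delta> n * \<delta> n = y n" using assms(1) by (simp add: less_imp_neq[symmetric])
    ultimately show ?thesis by simp
  qed
  show "\<forall>\<^sub>F n in sequentially. norm ((exp (y n) - (\<Sum>t<T. y n ^ t / fact t)) / \<delta> n ^ R)
        \<le> exp \<bar>y n\<bar> / fact T * \<bar>y n / \<delta> n\<bar> ^ T * \<delta> n ^ (T - R)"
  proof (intro always_eventually allI)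
    fix n
    obtain t where t: "\<bar>t\<bar> \<le> \<bar>y n\<bar>" "exp (y n) = (\<Sum>m<T. (y n ^ m) / fact m) + (exp t / fact T) * y n ^ T"
      using Maclaurin_exp_le by blast
    have dp: "\<delta> n > 0" using assms(1) .
    have "norm ((exp (y n) - (\<Sum>t<T. y n ^ t / fact t)) / \<delta> n ^ R) = exp t / fact T * \<bar>y n\<bar> ^ T / \<delta> n ^ R"
      using t dp by (simp add: abs_mult power_abs)
    also have "\<dots> \<le> exp \<bar>y n\<bar> / fact T * \<bar>y n\<bar> ^ T / \<delta> n ^ R"
      using t dp by (intro divide_right_mono mult_right_mono divide_right_mono) auto
    also have "\<dots> = exp \<bar>y n\<bar> / fact T * (\<bar>y n\<bar> ^ T / \<delta> n ^ R)" by simp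
    also have "\<bar>y n\<bar> ^ T / \<delta> n ^ R = \<bar>y n / \<delta> n\<bar> ^ T * \<delta> n ^ (T - R)"
    proof -
      have e: "\<delta> n ^ T = \<delta> n ^ R * \<delta> n ^ (T - R)" using assms(4) by (simp add: power_add[symmetric])
      have "\<bar>y n / \<delta> n\<bar> ^ T * \<delta> n ^ (T - R) = \<bar>y n\<bar> ^ T / \<delta> n ^ T * \<delta> n ^ (T - R)"
        using dp by (simp add: power_divide)
      also have "\<dots> = \<bar>y n\<bar> ^ T / \<delta> n ^ R" unfolding e using dp by simp
      finally show ?thesis by simp
    qed
    finally show "norm ((exp (y n) - (\<Sum>t<T. y n ^ t / fact t)) / \<delta> n ^ R)
        \<le> exp \<bar>y n\<bar> / fact T * \<bar>y n / \<delta> n\<bar> ^ T * \<delta> n ^ (T - R)" by simp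
  qed
  have "(\<lambda>n. exp \<bar>y n\<bar> / fact T * \<bar>y n / \<delta> n\<bar> ^ T * \<delta> n ^ (T - R)) \<longlonglongrightarrow>
      exp \<bar>0\<bar> / fact T * \<bar>0\<bar> ^ T * 0 ^ (T - R)"
    by (intro tendsto_intros assms y0) simp
  then show "(\<lambda>n. exp \<bar>y n\<bar> / fact T * \<bar>y n / \<delta> n\<bar> ^ T * \<delta> n ^ (T - R)) \<longlonglongrightarrow> 0"
    by (rule tendsto_eq_rhs) (use assms(4) in simp)
qed

lemma exp_pert_err:
  fixes P L \<delta> :: "nat \<Rightarrow> real"
  assumes "\<And>n. \<delta> n > 0" "\<delta> \<longlonglongrightarrow> 0" "P \<longlonglongrightarrow> 0" "(\<lambda>n. L n / \<delta> n ^ R) \<longlonglongrightarrow> 0"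
  shows "(\<lambda>n. (exp (P n + L n) - exp (P n)) / \<delta> n ^ R) \<longlonglongrightarrow> 0"
proof (rule Lim_null_comparison)
  have L0: "L \<longlonglongrightarrow> 0"
  proof -
    have "(\<lambda>n. L n / \<delta> n ^ R * \<delta> n ^ R) \<longlonglongrightarrow> 0 * 0 ^ R" by (intro tendsto_intros assms)
    moreover have "\<And>n. L n / \<delta> n ^ R * \<delta> n ^ R = L n" using assms(1) by (simp add: less_imp_neq[symmetric])
    ultimately show ?thesis by (cases R) simp_all
  qed
  show "\<forall>\<^sub>F n in sequentially. norm ((exp (P n + L n) - exp (P n)) / \<delta> n ^ R)
        \<le> exp \<bar>P n\<bar> * exp \<bar>L n\<bar> * \<bar>L n / \<delta> n ^ R\<bar>"
  proof (intro always_eventually allI)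
    fix n
    obtain t where t: "\<bar>t\<bar> \<le> \<bar>L n\<bar>" "exp (L n) = (\<Sum>m<1. (L n ^ m) / fact m) + (exp t / fact 1) * L n ^ 1"
      using Maclaurin_exp_le by blast
    have dp: "\<delta> n > 0" using assms(1) .
    have "norm ((exp (P n + L n) - exp (P n)) / \<delta> n ^ R) = exp (P n) * (exp t * \<bar>L n / \<delta> n ^ R\<bar>)"
    proof -
      have "exp (P n + L n) - exp (P n) = exp (P n) * (exp t * L n)"
        using t by (simp add: exp_add algebra_simps)
      then show ?thesis using dp by (simp add: abs_mult)
    qed
    also have "\<dots> \<le> exp \<bar>P n\<bar> * (exp \<bar>L n\<bar> * \<bar>L n / \<delta> n ^ R\<bar>)"
      using t by (intro mult_mono) auto
    finally show "norm ((exp (P n + L n) - exp (P n)) / \<delta> n ^ R) \<le> exp \<bar>P n\<bar> * exp \<bar>L n\<bar> * \<bar>L n / \<delta> n ^ R\<bar>"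
      by (simp add: mult.assoc)
  qed
  have "(\<lambda>n. exp \<bar>P n\<bar> * exp \<bar>L n\<bar> * \<bar>L n / \<delta> n ^ R\<bar>) \<longlonglongrightarrow> exp \<bar>0\<bar> * exp \<bar>0\<bar> * \<bar>0\<bar>"
    by (intro tendsto_intros assms L0)
  then show "(\<lambda>n. exp \<bar>P n\<bar> * exp \<bar>L n\<bar> * \<bar>L n / \<delta> n ^ R\<bar>) \<longlonglongrightarrow> 0" by simp
qed



lemma fdiff_scale: "fdiff r (\<lambda>l. c * f l) = c * fdiff r f"
  unfolding fdiff_def by (simp add: sum_distrib_left mult_ac)

lemma fdiff_add: "fdiff r (\<lambda>l. f l + g l) = fdiff r f + fdiff r g"
  unfolding fdiff_def by (simp add: sum.distrib algebra_simps)

lemma core: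
  fixes E :: "nat \<Rightarrow> nat \<Rightarrow> real" and \<delta> :: "nat \<Rightarrow> real" and q :: "nat \<Rightarrow> real poly"
  assumes dpos: "\<And>n. \<delta> n > 0" and d0: "\<delta> \<longlonglongrightarrow> 0" and qt: "ctends q qinf"
    and deg: "\<And>n. degree (q n) \<le> N" and rN: "r \<le> N" and aR: "a + r \<le> R"
    and err: "\<And>j. j \<le> R \<Longrightarrow> (\<lambda>n. (E n j - poly (q n) (\<delta> n * real j)) / \<delta> n ^ R) \<longlonglongrightarrow> 0"
  shows "(\<lambda>n. fdiff r (\<lambda>l. E n (a + l)) / \<delta> n ^ r) \<longlonglongrightarrow> fact r * coeff qinf r"
proof -
  define X where "X n l = (E n (a + l) - poly (q n) (\<delta> n * real (a + l))) / \<delta> n ^ R" for n l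
  define D where "D s = fdiff r (\<lambda>l. (real a + real l) ^ s)" for s
  have eq: "fdiff r (\<lambda>l. E n (a + l)) / \<delta> n ^ r =
      fdiff r (X n) * \<delta> n ^ (R - r) + (\<Sum>s\<le>N. coeff (q n) s * (\<delta> n ^ s / \<delta> n ^ r) * D s)" for n
  proof -
    have dp: "\<delta> n > 0" by (rule dpos)
    have R: "\<delta> n ^ R = \<delta> n ^ r * \<delta> n ^ (R - r)" using aR by (simp add: power_add[symmetric])
    have E1: "E n (a + l) = \<delta> n ^ R * X n l + (\<Sum>s\<le>N. coeff (q n) s * \<delta> n ^ s * (real a + real l) ^ s)" for l
      using dp unfolding X_def poly_bounded_deg[OF deg]
      by (simp add: power_mult_distrib mult_ac)
    have "fdiff r (\<lambda>l. E n (a + l)) = \<delta> n ^ R * fdiff r (X n) + (\<Sum>s\<le>N. coeff (q n) s * \<delta> n ^ s * D s)"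
      unfolding E1 fdiff_add fdiff_scale D_def
      by (subst fdiff_sum) (simp_all add: fdiff_scale)
    moreover have "(\<Sum>s\<le>N. coeff (q n) s * (\<delta> n ^ s / \<delta> n ^ r) * D s) =
        (\<Sum>s\<le>N. coeff (q n) s * \<delta> n ^ s * D s) / \<delta> n ^ r"
      by (simp add: sum_divide_distrib)
    ultimately show ?thesis using dp unfolding R by (simp add: field_simps)
  qed
  have lim1: "(\<lambda>n. fdiff r (X n) * \<delta> n ^ (R - r)) \<longlonglongrightarrow> 0"
  proof -
    have "(\<lambda>n. fdiff r (X n)) \<longlonglongrightarrow> 0"
    proof -
      have "(\<lambda>n. \<Sum>l\<le>r. real (r choose l) * (-1) ^ (r - l) * X n l) \<longlonglongrightarrow> (\<Sum>l\<le>r. real (r choose l) * (-1) ^ (r - l) * 0)"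
        unfolding X_def using aR by (intro tendsto_sum tendsto_mult tendsto_const err) auto
      then show ?thesis unfolding fdiff_def by simp
    qed
    moreover have "(\<lambda>n. \<delta> n ^ (R - r)) \<longlonglongrightarrow> 0 ^ (R - r)" by (intro tendsto_intros d0)
    ultimately have "(\<lambda>n. fdiff r (X n) * \<delta> n ^ (R - r)) \<longlonglongrightarrow> 0 * 0 ^ (R - r)" by (rule tendsto_mult)
    then show ?thesis by simp
  qed
  have lim2: "(\<lambda>n. \<Sum>s\<le>N. coeff (q n) s * (\<delta> n ^ s / \<delta> n ^ r) * D s) \<longlonglongrightarrow>
      (\<Sum>s\<le>N. if s = r then fact r * coeff qinf r else 0)"
  proof (intro tendsto_sum)
    fix s assume "s \<in> {..N}"
    consider "s < r" | "s = r" | "s > r" by linarith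
    then show "(\<lambda>n. coeff (q n) s * (\<delta> n ^ s / \<delta> n ^ r) * D s) \<longlonglongrightarrow> (if s = r then fact r * coeff qinf r else 0)"
    proof cases
      case 1
      then have "D s = 0" unfolding D_def by (subst fdiff_pow) auto
      then show ?thesis using 1 by simp
    next
      case 2
      then have "D s = fact r" unfolding D_def by (subst fdiff_pow) auto
      moreover have "(\<lambda>n. coeff (q n) r) \<longlonglongrightarrow> coeff qinf r" using qt unfolding ctends_def by blast
      ultimately show ?thesis using 2 dpos by (simp add: less_imp_neq[symmetric] tendsto_mult_right mult.commute)
    next
      case 3
      have e: "\<delta> n ^ s / \<delta> n ^ r = \<delta> n ^ (s - r)" for n
        using 3 dpos[of n] by (simp add: power_diff less_imp_neq[symmetric])
      have "(\<lambda>n. coeff (q n) s * \<delta> n ^ (s - r) * D s) \<longlonglongrightarrow> coeff qinf s * 0 ^ (s - r) * D s"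
        using qt d0 unfolding ctends_def by (intro tendsto_intros) auto
      moreover have "coeff qinf s * 0 ^ (s - r) * D s = 0" using 3 by simp
      ultimately show ?thesis using 3 unfolding e by simp
    qed
  qed
  have "(\<Sum>s\<le>N. if s = r then fact r * coeff qinf r else 0) = fact r * coeff qinf r"
    using rN by (simp add: sum.delta)
  with tendsto_add[OF lim1 lim2] show ?thesis unfolding eq by simp
qed



definition ctarget :: "real \<Rightarrow> nat \<Rightarrow> real" where
  "ctarget \<kappa> r = (if even r then \<kappa> ^ (r div 2) / fact (r div 2) else 0)"

lemma coeff_qinf:
  assumes "r < 2 * T"
  shows "coeff (\<Sum>t<T. smult (1 / fact t) ([:0, 0, \<kappa>:] ^ t)) r = ctarget \<kappa> r"
proof -
  have m: "[:0, 0, \<kappa>:] = monom \<kappa> 2" by (simp add: monom_altdef power2_eq_square)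
  have "coeff (\<Sum>t<T. smult (1 / fact t) ([:0, 0, \<kappa>:] ^ t)) r =
      (\<Sum>t<T. if t = r div 2 \<and> even r then \<kappa> ^ t / fact t else 0)"
    unfolding coeff_sum m monom_power coeff_smult coeff_monom
    by (intro sum.cong) auto
  also have "\<dots> = ctarget \<kappa> r"
    using assms unfolding ctarget_def by (auto simp: sum.delta')
  finally show ?thesis .
qed

lemma main_limit:
  fixes \<alpha> A \<delta> :: "nat \<Rightarrow> real" and \<kappa> :: real and m :: nat
  assumes LP: "log_polynomial \<alpha> m A \<kappa> \<delta>" and ar: "a + r \<le> m + 1"
  shows "(\<lambda>n. fdiff r (\<lambda>l. \<alpha> (n + (a + l)) / (\<alpha> n * exp (A n * real (a + l)))) / \<delta> n ^ r)
           \<longlonglongrightarrow> fact r * ctarget \<kappa> r"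
proof -
  from LP have m2: "m \<ge> 2" and apos: "\<And>n. \<alpha> n > 0" and dpos: "\<And>n. \<delta> n > 0" and d0: "\<delta> \<longlonglongrightarrow> 0"
    unfolding log_polynomial_def by auto
  from LP obtain g :: "nat \<Rightarrow> nat \<Rightarrow> real" where
    go: "\<And>k. k \<in> {3..m} \<Longrightarrow> g k \<in> o[sequentially](\<lambda>n. \<delta> n ^ k)" and
    gl: "\<And>j. j \<in> {1..m+1} \<Longrightarrow> (\<lambda>n. ln (\<alpha> (n + j) / \<alpha> n)
                 - (A n * real j + \<kappa> * \<delta> n ^ 2 * real j ^ 2
                    + (\<Sum>k=3..m. g k n * real j ^ k)))
           \<in> o[sequentially](\<lambda>n. \<delta> n ^ (m + 1))"
    unfolding log_polynomial_def by blast
  define h where "h k n = g k n / \<delta> n ^ k" for k n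
  have h0: "\<And>k. k \<in> {3..m} \<Longrightarrow> h k \<longlonglongrightarrow> 0"
    unfolding h_def using go by (intro smalloD_tendsto) auto
  define p where "p n = [:0, 0, \<kappa>:] + (\<Sum>k=3..m. monom (h k n) k)" for n
  define T where "T = m + 2"
  define q where "q n = (\<Sum>t<T. smult (1 / fact t) (p n ^ t))" for n
  define qinf where "qinf = (\<Sum>t<T. smult (1 / fact t) ([:0, 0, \<kappa>:] ^ t))"
  define E where "E n j = \<alpha> (n + j) / (\<alpha> n * exp (A n * real j))" for n j
  have pt: "ctends p [:0, 0, \<kappa>:]"
  proof -
    have "ctends (\<lambda>n. monom (h k n) k) 0" if "k \<in> {3..m}" for k
      unfolding ctends_def coeff_monom
    proof
      fix i show "(\<lambda>n. if k = i then h k n else 0) \<longlonglongrightarrow> coeff 0 i"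
        using h0[OF that] by (cases "k = i") simp_all
    qed
    then have "ctends (\<lambda>n. \<Sum>k=3..m. monom (h k n) k) (\<Sum>k=3..m. 0)" by (intro ctends_sum)
    then have "ctends (\<lambda>n. [:0, 0, \<kappa>:] + (\<Sum>k=3..m. monom (h k n) k)) ([:0, 0, \<kappa>:] + 0)"
      by (intro ctends_add ctends_const) simp
    then show ?thesis unfolding p_def by simp
  qed
  have qt: "ctends q qinf"
    unfolding q_def qinf_def by (intro ctends_sum ctends_smult ctends_power pt)
  have degp: "degree (p n) \<le> m" for n
  proof -
    have "degree (\<Sum>k=3..m. monom (h k n) k) \<le> m"
      by (intro degree_sum_le) (auto intro: order.trans[OF degree_monom_le])
    moreover have "degree [:0, 0, \<kappa>:] \<le> m" using m2 by simp
    ultimately show ?thesis unfolding p_def by (intro degree_add_le)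
  qed
  have degq: "degree (q n) \<le> m * T" for n
    unfolding q_def
  proof (intro degree_sum_le)
    fix t assume "t \<in> {..<T}"
    have "degree (p n ^ t) \<le> m * t"
      using order.trans[OF degree_power_le, of "p n" t] degp[of n] by (simp add: mult_right_mono)
    also have "\<dots> \<le> m * T" using \<open>t \<in> {..<T}\<close> by simp
    finally show "degree (smult (1 / fact t) (p n ^ t)) \<le> m * T"
      by (intro order.trans[OF degree_smult_le])
  qed simp
  have rN: "r \<le> m * T" using ar m2 unfolding T_def by (simp add: algebra_simps)
  have err: "(\<lambda>n. (E n j - poly (q n) (\<delta> n * real j)) / \<delta> n ^ (m + 1)) \<longlonglongrightarrow> 0"
    if j: "j \<le> m + 1" for j
  proof -
    define y where "y n = poly (p n) (\<delta> n * real j)" for n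
    have yeq: "y n = \<kappa> * \<delta> n ^ 2 * real j ^ 2 + (\<Sum>k=3..m. g k n * real j ^ k)" for n
    proof -
      have "h k n * (\<delta> n * real j) ^ k = g k n * real j ^ k" for k
        unfolding h_def using dpos[of n] by (simp add: power_mult_distrib less_imp_neq[symmetric])
      then show ?thesis unfolding y_def p_def by (simp add: poly_sum poly_monom power2_eq_square mult_ac)
    qed
    have yd: "(\<lambda>n. y n / \<delta> n) \<longlonglongrightarrow> 0"
    proof -
      have e: "y n / \<delta> n = \<kappa> * \<delta> n * real j ^ 2 + (\<Sum>k=3..m. h k n * \<delta> n ^ (k - 1) * real j ^ k)" for n
      proof -
        have "g k n * real j ^ k / \<delta> n = h k n * \<delta> n ^ (k - 1) * real j ^ k" if "k \<in> {3..m}" for k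
        proof -
          have "\<delta> n ^ k = \<delta> n * \<delta> n ^ (k - 1)" using that by (cases k) auto
          then show ?thesis unfolding h_def using dpos[of n] by (simp add: field_simps)
        qed
        then show ?thesis unfolding yeq using dpos[of n]
          by (simp add: add_divide_distrib sum_divide_distrib power2_eq_square)
      qed
      have "(\<lambda>n. \<kappa> * \<delta> n * real j ^ 2 + (\<Sum>k=3..m. h k n * \<delta> n ^ (k - 1) * real j ^ k))
             \<longlonglongrightarrow> \<kappa> * 0 * real j ^ 2 + (\<Sum>k=3..m. 0 * 0 ^ (k - 1) * real j ^ k)"
        using h0 d0 by (intro tendsto_intros) auto
      then show ?thesis unfolding e by simp
    qed
    have y0: "y \<longlonglongrightarrow> 0"
    proof -
      have "(\<lambda>n. y n / \<delta> n * \<delta> n) \<longlonglongrightarrow> 0 * 0" by (intro tendsto_mult yd d0)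
      moreover have "\<And>n. y n / \<delta> n * \<delta> n = y n" using dpos by (simp add: less_imp_neq[symmetric])
      ultimately show ?thesis by simp
    qed
    define L where "L n = ln (\<alpha> (n + j) / \<alpha> n) - A n * real j - y n" for n
    have L: "(\<lambda>n. L n / \<delta> n ^ (m + 1)) \<longlonglongrightarrow> 0"
    proof (cases "j = 0")
      case True
      have "y n = 0" for n unfolding y_def p_def True by (simp add: poly_sum poly_monom)
      then have "L n = 0" for n unfolding L_def True using apos[of n] by simp
      then show ?thesis by simp
    next
      case False
      then have "j \<in> {1..m+1}" using j by auto
      from smalloD_tendsto[OF gl[OF this]] show ?thesis
        unfolding L_def yeq by (simp add: algebra_simps)
    qed
    have Eeq: "E n j = exp (y n + L n)" for n
    proof -
      have "y n + L n = ln (\<alpha> (n + j) / \<alpha> n) - A n * real j" unfolding L_def by simp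
      then have "exp (y n + L n) = (\<alpha> (n + j) / \<alpha> n) / exp (A n * real j)"
        using apos[of n] apos[of "n + j"] by (simp add: exp_diff)
      then show ?thesis unfolding E_def by simp
    qed
    have qeq: "poly (q n) (\<delta> n * real j) = (\<Sum>t<T. y n ^ t / fact t)" for n
      unfolding q_def y_def by (simp add: poly_sum)
    have "(\<lambda>n. (exp (y n + L n) - exp (y n)) / \<delta> n ^ (m + 1) + (exp (y n) - (\<Sum>t<T. y n ^ t / fact t)) / \<delta> n ^ (m + 1))
       \<longlonglongrightarrow> 0 + 0"
      by (intro tendsto_add exp_pert_err exp_trunc_err dpos d0 y0 L yd) (simp add: T_def)
    then show ?thesis unfolding Eeq qeq by (simp add: diff_divide_distrib)
  qed
  have "(\<lambda>n. fdiff r (\<lambda>l. E n (a + l)) / \<delta> n ^ r) \<longlonglongrightarrow> fact r * coeff qinf r"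
    by (rule core[OF dpos d0 qt degq rN ar err])
  moreover have "coeff qinf r = ctarget \<kappa> r"
    unfolding qinf_def using ar by (intro coeff_qinf) (simp add: T_def)
  ultimately show ?thesis unfolding E_def by simp
qed



lemma lin_monom: "[:0, c:] = monom c 1"
  by (simp add: monom_Suc monom_0)

lemma pcompose_monom': "pcompose (monom c j) q = smult c (q ^ j)"
  by (simp add: pcompose_altdef map_poly_monom poly_monom)

lemma const_pow: "[:u:] ^ m = [:u ^ m:]"
  by (induction m) (simp_all add: one_pCons mult.commute)

lemma coeff_lin_pow:
  fixes u v :: real
  shows "coeff ([:u, v:] ^ j) i = (if i \<le> j then real (j choose i) * v ^ i * u ^ (j - i) else 0)"
proof -
  have "[:u, v:] = monom v 1 + [:u:]" by (simp add: monom_Suc monom_0)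
  then have "[:u, v:] ^ j = (\<Sum>k\<le>j. of_nat (j choose k) * monom v 1 ^ k * [:u:] ^ (j - k))"
    by (simp add: binomial_ring)
  also have "\<dots> = (\<Sum>k\<le>j. monom (real (j choose k) * v ^ k * u ^ (j - k)) k)"
    by (intro sum.cong) (simp_all add: monom_power of_nat_poly const_pow smult_monom)
  finally show ?thesis by (simp add: coeff_sum coeff_monom)
qed

lemma coeff_hermite:
  "coeff (hermite d) i = (if i \<le> d \<and> even (d - i) then (-1) ^ ((d - i) div 2) * fact d / (fact ((d - i) div 2) * fact i) * 2 ^ i else 0)"
proof -
  have c: "(d - 2 * k = i) = (k = (d - i) div 2 \<and> i \<le> d \<and> even (d - i))" if "k \<le> d div 2" for k
  proof -
    have "2 * (d div 2) \<le> d" by presburger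
    then have k2: "2 * k \<le> d" using that by linarith
    show ?thesis
    proof
      assume h: "d - 2 * k = i"
      then have "d - i = 2 * k" using k2 by simp
      then show "k = (d - i) div 2 \<and> i \<le> d \<and> even (d - i)" using h k2 by simp
    next
      assume h: "k = (d - i) div 2 \<and> i \<le> d \<and> even (d - i)"
      then have "2 * k = d - i" using dvd_mult_div_cancel[of 2 "d - i"] by (simp del: even_diff_nat)
      then show "d - 2 * k = i" using h by simp
    qed
  qed
  have "coeff (hermite d) i = (\<Sum>k\<le>d div 2. if k = (d - i) div 2 \<and> i \<le> d \<and> even (d - i) then
           (-1) ^ ((d - i) div 2) * fact d / (fact ((d - i) div 2) * fact i) * 2 ^ i else 0)"
    unfolding hermite_def coeff_sum coeff_monom
  proof (intro sum.cong refl)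
    fix k assume "k \<in> {..d div 2}"
    then have k: "k \<le> d div 2" by simp
    show "(if d - 2 * k = i then (-1) ^ k * fact d / (fact k * fact (d - 2 * k)) * 2 ^ (d - 2 * k) else 0) =
      (if k = (d - i) div 2 \<and> i \<le> d \<and> even (d - i) then
           (-1) ^ ((d - i) div 2) * fact d / (fact ((d - i) div 2) * fact i) * 2 ^ i else 0)"
      using c[OF k] by auto
  qed
  also have "\<dots> = (if i \<le> d \<and> even (d - i) then (-1) ^ ((d - i) div 2) * fact d / (fact ((d - i) div 2) * fact i) * 2 ^ i else 0)"
  proof (cases "i \<le> d \<and> even (d - i)")
    case True
    have "(d - i) div 2 \<le> d div 2" by (simp add: div_le_mono)
    then show ?thesis using True by (simp add: sum.delta del: even_diff_nat)
  next
    case False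
    show ?thesis
      apply (subst if_not_P[OF False])
      apply (intro sum.neutral ballI if_not_P)
      using False by blast
  qed
  finally show ?thesis .
qed

definition tcoef :: "real \<Rightarrow> nat \<Rightarrow> nat \<Rightarrow> real" where
  "tcoef \<kappa> d i = (if i \<le> d then real (d choose i) * fact (d - i) * ctarget \<kappa> (d - i) else 0)"

lemma tcoef_alt:
  "tcoef \<kappa> d i = (if i \<le> d \<and> even (d - i) then \<kappa> ^ ((d - i) div 2) * fact d / (fact ((d - i) div 2) * fact i) else 0)"
proof (cases "i \<le> d")
  case True
  have "real (d choose i) * fact (d - i) = fact d / fact i"
    using True by (simp add: binomial_fact field_simps)
  then show ?thesis unfolding tcoef_def ctarget_def using True by (auto simp: field_simps)
qed (simp add: tcoef_def)

lemma coeff_target: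
  assumes "\<kappa> = 1 \<or> \<kappa> = -1"
  shows "coeff (hermite_target \<kappa> d) i = complex_of_real (tcoef \<kappa> d i)"
proof (cases "\<kappa> = -1")
  case True
  have "coeff (hermite_target \<kappa> d) i = complex_of_real ((1/2) ^ i * coeff (hermite d) i)"
    unfolding hermite_target_def True lin_monom by (simp add: coeff_map_poly)
  also have "(1/2) ^ i * coeff (hermite d) i = tcoef \<kappa> d i"
    unfolding coeff_hermite tcoef_alt True by (simp add: field_simps del: even_diff_nat)
  finally show ?thesis .
next
  case False
  then have k1: "\<kappa> = 1" using assms by simp
  have "coeff (hermite_target \<kappa> d) i = inverse (\<i> ^ d) * ((\<i> / 2) ^ i * complex_of_real (coeff (hermite d) i))"
    unfolding hermite_target_def k1 lin_monom by (simp add: coeff_map_poly)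
  also have "\<dots> = complex_of_real (tcoef \<kappa> d i)"
  proof (cases "i \<le> d \<and> even (d - i)")
    case True
    define k where "k = (d - i) div 2"
    have dk: "d = i + 2 * k" unfolding k_def using True by auto
    have h1: "\<i> ^ d = \<i> ^ i * (-1) ^ k" unfolding dk by (simp add: power_add power_mult)
    have h2: "complex_of_real (coeff (hermite d) i) = (-1) ^ k * fact d / (fact k * fact i) * 2 ^ i"
      unfolding coeff_hermite k_def[symmetric] using True by (simp del: even_diff_nat)
    have h3: "complex_of_real (tcoef \<kappa> d i) = fact d / (fact k * fact i)"
      unfolding tcoef_alt k_def[symmetric] k1 using True by (simp del: even_diff_nat)
    have m1: "((-1::complex) ^ k) * (-1) ^ k = 1" by (simp flip: power_add)
    have ii: "\<i> ^ i \<noteq> 0" by simp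
    have "inverse (\<i> ^ d) * ((\<i> / 2) ^ i * complex_of_real (coeff (hermite d) i))
        = (\<i> ^ i / \<i> ^ i) * ((-1) ^ k * (-1) ^ k) * (2 ^ i / 2 ^ i) * (fact d / (fact k * fact i))"
      unfolding h1 h2 by (simp add: power_divide field_simps)
    also have "\<dots> = fact d / (fact k * fact i)" using ii m1 by simp
    finally show ?thesis unfolding h3 .
  next
    case False
    then show ?thesis unfolding coeff_hermite tcoef_alt by (simp only: if_not_P[OF False]) simp
  qed
  finally show ?thesis .
qed



lemma reindex_if:
  fixes F :: "nat \<Rightarrow> real"
  assumes "i \<le> d"
  shows "(\<Sum>j\<le>d. if i \<le> j then F j else 0) = (\<Sum>l\<le>d - i. F (i + l))"
proof -
  have "(\<Sum>j\<le>d. if i \<le> j then F j else 0) = (\<Sum>j\<in>{j\<in>{..d}. i \<le> j}. F j)"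
    using sum.inter_filter[of "{..d}" F "\<lambda>j. i \<le> j"] by simp
  also have "{j\<in>{..d}. i \<le> j} = {0 + i..(d - i) + i}" using assms by auto
  also have "(\<Sum>j\<in>{0 + i..(d - i) + i}. F j) = (\<Sum>l\<in>{0..d - i}. F (l + i))"
    by (rule sum.shift_bounds_cl_nat_ivl)
  also have "\<dots> = (\<Sum>l\<le>d - i. F (i + l))" by (simp add: atLeast0AtMost add.commute)
  finally show ?thesis .
qed

lemma choose_swap:
  assumes "i + l \<le> d"
  shows "real (d choose (i + l)) * real ((i + l) choose i) = real (d choose i) * real ((d - i) choose l)"
proof -
  have "(d choose (i + l)) * ((i + l) choose i) = (d choose i) * ((d - i) choose (i + l - i))"
    using assms by (intro choose_mult) auto
  then show ?thesis by (simp flip: of_nat_mult)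
qed

lemma choose_swap2:
  assumes "i + l \<le> d"
  shows "real (d choose l) * real ((d - l) choose i) = real (d choose i) * real ((d - i) choose l)"
proof -
  have "(d choose (l + i)) * ((l + i) choose l) = (d choose l) * ((d - l) choose (l + i - l))"
    using assms by (intro choose_mult) auto
  moreover have "(d choose (i + l)) * ((i + l) choose i) = (d choose i) * ((d - i) choose (i + l - i))"
    using assms by (intro choose_mult) auto
  moreover have "((l + i) choose l) = ((i + l) choose i)"
    by (metis add.commute add_diff_cancel_right' binomial_symmetric le_add2)
  ultimately show ?thesis by (simp add: add.commute flip: of_nat_mult)
qed

lemma coeffJ:
  fixes \<alpha> A \<delta> :: "nat \<Rightarrow> real"
  assumes apos: "\<alpha> n > 0" and dpos: "\<delta> n > 0"
  shows "coeff (smult (inverse (\<delta> n ^ d)) (smult (inverse (\<alpha> n))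
             (pcompose (jensenJ \<alpha> d n) [:- 1 / exp (A n), \<delta> n / exp (A n):]))) i
     = (if i \<le> d then real (d choose i) * (-1) ^ (d - i) *
          (fdiff (d - i) (\<lambda>l. \<alpha> (n + (i + l)) / (\<alpha> n * exp (A n * real (i + l)))) / \<delta> n ^ (d - i)) else 0)"
proof -
  define e where "e = exp (A n)"
  have epos: "e > 0" unfolding e_def by simp
  have c: "coeff (smult (inverse (\<delta> n ^ d)) (smult (inverse (\<alpha> n))
             (pcompose (jensenJ \<alpha> d n) [:- 1 / exp (A n), \<delta> n / exp (A n):]))) i =
     inverse (\<delta> n ^ d) * inverse (\<alpha> n) * (\<Sum>j\<le>d. if i \<le> j then real (d choose j) * \<alpha> (n + j) *
         (real (j choose i) * (\<delta> n / e) ^ i * (- 1 / e) ^ (j - i)) else 0)"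
    unfolding jensenJ_def pcompose_sum pcompose_monom' coeff_sum coeff_smult coeff_lin_pow e_def
    by (auto simp: sum_distrib_left mult_ac intro!: sum.cong)
  show ?thesis
  proof (cases "i \<le> d")
    case False
    then show ?thesis unfolding c by (intro trans[OF _ sym[OF if_not_P[OF False]]]) simp
  next
    case True
    define r where "r = d - i"
    have tm: "inverse (\<delta> n ^ d) * inverse (\<alpha> n) * (real (d choose (i + l)) * \<alpha> (n + (i + l)) *
         (real ((i + l) choose i) * (\<delta> n / e) ^ i * (- 1 / e) ^ (i + l - i)))
       = real (d choose i) * (-1) ^ r * (real (r choose l) * (-1) ^ (r - l) *
          (\<alpha> (n + (i + l)) / (\<alpha> n * exp (A n * real (i + l))))) / \<delta> n ^ r" if l: "l \<le> r" for l
    proof -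
      have ch: "real (d choose (i + l)) * real ((i + l) choose i) = real (d choose i) * real (r choose l)"
        unfolding r_def using l r_def True by (intro choose_swap) auto
      have sg: "(-1::real) ^ r * (-1) ^ (r - l) = (-1) ^ l"
      proof -
        have e1: "r + (r - l) = l + 2 * (r - l)" using l by simp
        have "(-1::real) ^ r * (-1) ^ (r - l) = (-1) ^ (r + (r - l))" by (simp add: power_add)
        also have "\<dots> = (-1) ^ (l + 2 * (r - l))" unfolding e1 ..
        also have "\<dots> = (-1) ^ l" by (simp add: power_add power_mult)
        finally show ?thesis .
      qed
      have ex: "exp (A n * real (i + l)) = e ^ i * e ^ l"
      proof -
        have "exp (A n * real (i + l)) = exp (A n) ^ (i + l)"
          by (subst exp_of_nat_mult[symmetric]) (simp add: mult.commute)
        then show ?thesis unfolding e_def by (simp add: power_add)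
      qed
      have dd: "\<delta> n ^ d = \<delta> n ^ i * \<delta> n ^ r" unfolding r_def using True by (simp flip: power_add)
      have pw: "(\<delta> n / e) ^ i * (- 1 / e) ^ (i + l - i) = \<delta> n ^ i * (-1) ^ l / (e ^ i * e ^ l)"
        by (simp add: power_divide power_minus[of "1 / e"] power_one_over)
      define X where "X = \<alpha> (n + (i + l))"
      have dpi: "\<delta> n ^ i > 0" "\<delta> n ^ r > 0" "e ^ i > 0" "e ^ l > 0" using dpos epos by auto
      have "inverse (\<delta> n ^ d) * inverse (\<alpha> n) * (real (d choose (i + l)) * X *
         (real ((i + l) choose i) * (\<delta> n / e) ^ i * (- 1 / e) ^ (i + l - i)))
        = (real (d choose (i + l)) * real ((i + l) choose i)) * X * ((\<delta> n / e) ^ i * (- 1 / e) ^ (i + l - i))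
           * (inverse (\<delta> n ^ i * \<delta> n ^ r) * inverse (\<alpha> n))" unfolding dd by (simp only: mult_ac)
      also have "\<dots> = (real (d choose i) * real (r choose l)) * X * (\<delta> n ^ i * (-1) ^ l / (e ^ i * e ^ l))
           * (inverse (\<delta> n ^ i * \<delta> n ^ r) * inverse (\<alpha> n))" unfolding ch pw ..
      also have "\<dots> = real (d choose i) * real (r choose l) * (-1) ^ l * X / (\<alpha> n * (e ^ i * e ^ l)) / \<delta> n ^ r"
        using dpi apos dpos epos by (simp add: field_simps)
      also have "\<dots> = real (d choose i) * real (r choose l) * ((-1) ^ r * (-1) ^ (r - l)) * X / (\<alpha> n * (e ^ i * e ^ l)) / \<delta> n ^ r"
        unfolding sg ..
      also have "\<dots> = real (d choose i) * (-1) ^ r * (real (r choose l) * (-1) ^ (r - l) *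
          (X / (\<alpha> n * (e ^ i * e ^ l)))) / \<delta> n ^ r"
        by (simp only: mult_ac times_divide_eq_right)
      finally show ?thesis unfolding ex X_def .
    qed
    have "coeff (smult (inverse (\<delta> n ^ d)) (smult (inverse (\<alpha> n))
             (pcompose (jensenJ \<alpha> d n) [:- 1 / exp (A n), \<delta> n / exp (A n):]))) i =
       (\<Sum>l\<le>r. real (d choose i) * (-1) ^ r * (real (r choose l) * (-1) ^ (r - l) *
          (\<alpha> (n + (i + l)) / (\<alpha> n * exp (A n * real (i + l))))) / \<delta> n ^ r)"
      unfolding c reindex_if[OF True] r_def[symmetric] sum_distrib_left
      by (intro sum.cong refl tm) simp
    also have "\<dots> = real (d choose i) * (-1) ^ r *
          (fdiff r (\<lambda>l. \<alpha> (n + (i + l)) / (\<alpha> n * exp (A n * real (i + l)))) / \<delta> n ^ r)"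
      unfolding fdiff_def by (simp add: sum_distrib_left sum_divide_distrib mult.assoc)
    finally show ?thesis using True unfolding r_def by simp
  qed
qed

lemma coeffK:
  fixes \<alpha> A \<delta> :: "nat \<Rightarrow> real"
  assumes apos: "\<alpha> n > 0" and dpos: "\<delta> n > 0"
  shows "coeff (smult (inverse ((exp (A n) * \<delta> n) ^ d)) (smult (inverse (\<alpha> n))
             (pcompose (jensenK \<alpha> d n) [:- exp (A n), exp (A n) * \<delta> n:]))) i
     = (if i \<le> d then real (d choose i) *
          (fdiff (d - i) (\<lambda>l. \<alpha> (n + l) / (\<alpha> n * exp (A n * real l))) / \<delta> n ^ (d - i)) else 0)"
proof -
  define e where "e = exp (A n)"
  have epos: "e > 0" unfolding e_def by simp
  have c: "coeff (smult (inverse ((exp (A n) * \<delta> n) ^ d)) (smult (inverse (\<alpha> n))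
             (pcompose (jensenK \<alpha> d n) [:- exp (A n), exp (A n) * \<delta> n:]))) i =
     inverse ((e * \<delta> n) ^ d) * inverse (\<alpha> n) * (\<Sum>j\<le>d. if i \<le> d - j then real (d choose j) * \<alpha> (n + j) *
         (real ((d - j) choose i) * (e * \<delta> n) ^ i * (- e) ^ (d - j - i)) else 0)"
    unfolding jensenK_def pcompose_sum pcompose_monom' coeff_sum coeff_smult coeff_lin_pow e_def
    by (auto simp: sum_distrib_left mult_ac intro!: sum.cong)
  show ?thesis
  proof (cases "i \<le> d")
    case False
    have "\<forall>j\<in>{..d}. \<not> i \<le> d - j" using False by auto
    then show ?thesis unfolding c using False by (subst sum.neutral) auto
  next
    case True
    define r where "r = d - i"
    have re: "(\<Sum>j\<le>d. if i \<le> d - j then G j else 0) = (\<Sum>j\<le>r. G j)" for G :: "nat \<Rightarrow> real"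
    proof -
      have "(\<Sum>j\<le>d. if i \<le> d - j then G j else 0) = (\<Sum>j\<in>{j\<in>{..d}. i \<le> d - j}. G j)"
        using sum.inter_filter[of "{..d}" G "\<lambda>j. i \<le> d - j"] by simp
      also have "{j\<in>{..d}. i \<le> d - j} = {..r}" unfolding r_def using True by auto
      finally show ?thesis .
    qed
    have tm: "inverse ((e * \<delta> n) ^ d) * inverse (\<alpha> n) * (real (d choose j) * \<alpha> (n + j) *
         (real ((d - j) choose i) * (e * \<delta> n) ^ i * (- e) ^ (d - j - i)))
       = real (d choose i) * (real (r choose j) * (-1) ^ (r - j) *
          (\<alpha> (n + j) / (\<alpha> n * exp (A n * real j)))) / \<delta> n ^ r" if j: "j \<le> r" for j
    proof -
      have ch: "real (d choose j) * real ((d - j) choose i) = real (d choose i) * real (r choose j)"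
        unfolding r_def using j r_def True by (intro choose_swap2) auto
      have ex: "exp (A n * real j) = e ^ j"
        unfolding e_def by (subst exp_of_nat_mult[symmetric]) (simp add: mult.commute)
      have dj: "d - j - i = r - j" unfolding r_def by simp
      have dd: "(e * \<delta> n) ^ d = (e ^ i * \<delta> n ^ i) * (e ^ (r - j) * e ^ j * \<delta> n ^ r)"
      proof -
        have "d = i + ((r - j) + j)" using j True unfolding r_def by simp
        then have "(e * \<delta> n) ^ d = (e * \<delta> n) ^ (i + ((r - j) + j))" by simp
        also have "\<dots> = (e ^ i * \<delta> n ^ i) * (e ^ (r - j) * e ^ j * \<delta> n ^ ((r - j) + j))"
          by (simp add: power_add power_mult_distrib mult_ac)
        also have "(r - j) + j = r" using j by simp
        finally show ?thesis .
      qed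
      have pw: "(e * \<delta> n) ^ i * (- e) ^ (d - j - i) = (e ^ i * \<delta> n ^ i) * ((-1) ^ (r - j) * e ^ (r - j))"
        unfolding dj by (simp add: power_mult_distrib power_minus[of e])
      define X where "X = \<alpha> (n + j)"
      have dpi: "\<delta> n ^ i > 0" "\<delta> n ^ r > 0" "e ^ i > 0" "e ^ j > 0" "e ^ (r - j) > 0" using dpos epos by auto
      have "inverse ((e * \<delta> n) ^ d) * inverse (\<alpha> n) * (real (d choose j) * X *
         (real ((d - j) choose i) * (e * \<delta> n) ^ i * (- e) ^ (d - j - i)))
        = (real (d choose j) * real ((d - j) choose i)) * X * ((e * \<delta> n) ^ i * (- e) ^ (d - j - i))
           * (inverse ((e * \<delta> n) ^ d) * inverse (\<alpha> n))" by (simp only: mult_ac)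
      also have "\<dots> = (real (d choose i) * real (r choose j)) * X * ((e ^ i * \<delta> n ^ i) * ((-1) ^ (r - j) * e ^ (r - j)))
           * (inverse ((e ^ i * \<delta> n ^ i) * (e ^ (r - j) * e ^ j * \<delta> n ^ r)) * inverse (\<alpha> n))"
        unfolding ch pw dd ..
      also have "\<dots> = real (d choose i) * (real (r choose j) * (-1) ^ (r - j) * (X / (\<alpha> n * e ^ j))) / \<delta> n ^ r"
        using dpi apos dpos epos by (simp add: field_simps)
      finally show ?thesis unfolding ex X_def .
    qed
    have "coeff (smult (inverse ((exp (A n) * \<delta> n) ^ d)) (smult (inverse (\<alpha> n))
             (pcompose (jensenK \<alpha> d n) [:- exp (A n), exp (A n) * \<delta> n:]))) i =
       (\<Sum>j\<le>r. real (d choose i) * (real (r choose j) * (-1) ^ (r - j) *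
          (\<alpha> (n + j) / (\<alpha> n * exp (A n * real j)))) / \<delta> n ^ r)"
      unfolding c re sum_distrib_left
      by (intro sum.cong refl tm) simp
    also have "\<dots> = real (d choose i) *
          (fdiff r (\<lambda>l. \<alpha> (n + l) / (\<alpha> n * exp (A n * real l))) / \<delta> n ^ r)"
      unfolding fdiff_def by (simp add: sum_distrib_left sum_divide_distrib mult.assoc)
    finally show ?thesis using True unfolding r_def by simp
  qed
qed



theorem theorem1p6:
  fixes \<alpha> A \<delta> :: "nat \<Rightarrow> real" and \<kappa> :: real and m d :: nat
  assumes "log_polynomial \<alpha> m A \<kappa> \<delta>"
    and "1 \<le> d" and "d \<le> m + 1"
  shows "hermite_jensen \<alpha> d A \<kappa> \<delta>"
proof -
  note LP = assms(1)
  from LP have kap: "\<kappa> = 1 \<or> \<kappa> = -1" and apos: "\<And>n. \<alpha> n > 0" and dpos: "\<And>n. \<delta> n > 0"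
    unfolding log_polynomial_def by auto
  have sgn: "(-1) ^ r * ctarget \<kappa> r = ctarget \<kappa> r" for r
    unfolding ctarget_def by auto
  have tc: "tcoef \<kappa> d i = real (d choose i) * (fact (d - i) * ctarget \<kappa> (d - i))" if "i \<le> d" for i
    unfolding tcoef_def using that by simp
  have J: "(\<lambda>n. coeff (smult (inverse (\<delta> n ^ d)) (smult (inverse (\<alpha> n))
             (pcompose (jensenJ \<alpha> d n) [:- 1 / exp (A n), \<delta> n / exp (A n):]))) i) \<longlonglongrightarrow> tcoef \<kappa> d i" for i
  proof (cases "i \<le> d")
    case True
    have "(\<lambda>n. real (d choose i) * (-1) ^ (d - i) *
          (fdiff (d - i) (\<lambda>l. \<alpha> (n + (i + l)) / (\<alpha> n * exp (A n * real (i + l)))) / \<delta> n ^ (d - i)))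
        \<longlonglongrightarrow> real (d choose i) * (-1) ^ (d - i) * (fact (d - i) * ctarget \<kappa> (d - i))"
      using True assms(3) by (intro tendsto_intros main_limit[OF LP]) auto
    also have "real (d choose i) * (-1) ^ (d - i) * (fact (d - i) * ctarget \<kappa> (d - i)) = tcoef \<kappa> d i"
      unfolding tc[OF True] using sgn[of "d - i"] by (simp add: mult_ac)
    finally have lim: "(\<lambda>n. real (d choose i) * (-1) ^ (d - i) *
          (fdiff (d - i) (\<lambda>l. \<alpha> (n + (i + l)) / (\<alpha> n * exp (A n * real (i + l)))) / \<delta> n ^ (d - i)))
        \<longlonglongrightarrow> tcoef \<kappa> d i" .
    show ?thesis
      apply (subst coeffJ[OF apos dpos])
      using lim True by simp
  next
    case False
    then show ?thesis apply (subst coeffJ[OF apos dpos]) unfolding tcoef_def by simp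
  qed
  have K: "(\<lambda>n. coeff (smult (inverse ((exp (A n) * \<delta> n) ^ d)) (smult (inverse (\<alpha> n))
             (pcompose (jensenK \<alpha> d n) [:- exp (A n), exp (A n) * \<delta> n:]))) i) \<longlonglongrightarrow> tcoef \<kappa> d i" for i
  proof (cases "i \<le> d")
    case True
    have "(\<lambda>n. fdiff (d - i) (\<lambda>l. \<alpha> (n + (0 + l)) / (\<alpha> n * exp (A n * real (0 + l)))) / \<delta> n ^ (d - i))
        \<longlonglongrightarrow> fact (d - i) * ctarget \<kappa> (d - i)"
      using True assms(3) by (intro main_limit[OF LP]) auto
    then have "(\<lambda>n. real (d choose i) * (fdiff (d - i) (\<lambda>l. \<alpha> (n + l) / (\<alpha> n * exp (A n * real l))) / \<delta> n ^ (d - i)))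
        \<longlonglongrightarrow> real (d choose i) * (fact (d - i) * ctarget \<kappa> (d - i))"
      by (intro tendsto_intros) simp
    then show ?thesis apply (subst coeffK[OF apos dpos]) unfolding tc[OF True] using True by simp
  next
    case False
    then show ?thesis apply (subst coeffK[OF apos dpos]) unfolding tcoef_def by simp
  qed
  have cm: "\<And>p i. coeff (map_poly complex_of_real p) i = complex_of_real (coeff p i)"
    by (rule coeff_map_poly) simp
  show ?thesis
    unfolding hermite_jensen_def poly_coeff_tendsto_def coeff_target[OF kap] cm
    using assms(2) kap apos dpos tendsto_of_real[OF J] tendsto_of_real[OF K]
    by blast
qed

end
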